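(* Let $T:\mathcal{X}\to\mathcal{X}$, $\mathcal{X}\subseteq\mathbb{R}^n$, and data points $x_1,\dots,x_N$ with $x_i^+=T(x_i)$. Let $\Psi=[\psi_1,\dots,\psi_s]$ be a dictionary of real-valued observables spanning $\mathcal{S}$, and let $A=\Psi(X)\in\mathbb{R}^{N\times s}$ and $B=\Psi(X^+)\in\mathbb{R}^{N\times s}$ (rows $\Psi(x_i)$, $\Psi(x_i^+)$) have full column rank. Define the forward and backward EDMD matrices $K_f=A^\dagger B$, $K_b=B^\dagger A$ and the consistency matrix $M_c=I-K_fK_b\in\mathbb{R}^{s\times s}$. Let $\theta_1,\dots,\theta_s$ be the principal angles between $\mathcal{R}(A)$ and $\mathcal{R}(B)$ in $\mathbb{R}^N$ (equivalently, between $\mathcal{S}$ and $\mathcal{K}\mathcal{S}=\mathrm{span}\{\psi_j\circ T\}$ with the empirical inner product $\langle f,g\rangle=\frac1N\sum_i f(x_i)g(x_i)$). Then: (1) the eigenvalues $\lambda_1,\dots,\lambda_s$ of $M_c$ (with multiplicity) are $\lambda_i=\sin^2\theta_i$, $i=1,\dots,s$; (2) $M_c$ has eigenvectors $v_1,\dots,v_s$ with $M_cv_i=\sin^2\theta_i\,v_i$ such that $Av_i$ is the $i$-th principal vector of $\mathcal{R}(A)$ (with respect to $\mathcal{R}(B)$); correspondingly the function $u_i^{\mathcal{S}}(\cdot)=\Psi(\cdot)v_i$ is the $i$-th principal vector of $\mathcal{S}$ with respect to $\mathcal{K}\mathcal{S}$, for all $i=1,\dots,s$.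
   Context: $M^\dagger$ denotes the Moore–Penrose pseudoinverse and $\mathcal{R}(M)$ the column space. Principal angles and vectors: for subspaces $\mathcal{U},\mathcal{V}$ of an inner product space with $\dim\mathcal{U}=d_1$, $\dim\mathcal{V}=d_2$, $k=\min\{d_1,d_2\}$, the principal angles $0\le\theta_1\le\dots\le\theta_k\le\pi/2$ are defined recursively by $\cos\theta_j=\max|\langle u,v\rangle|$ over unit $u\in\mathcal{U}$, $v\in\mathcal{V}$ orthogonal to the previously chosen $u_1,\dots,u_{j-1}$ and $v_1,\dots,v_{j-1}$ respectively; the maximizers $(u_j,v_j)$ are the $j$-th pair of principal vectors. Observables are identified with their value vectors on the data points $x_1,\dots,x_N$ (unit normalization understood up to the constant factor from the empirical measure). *)

theory Defs
  imports "HOL-Analysis.Analysis"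
begin

definition pinv :: "real^'c^'r \<Rightarrow> real^'r^'c" where
  "pinv M = (THE X. M ** X ** M = M \<and> X ** M ** X = X \<and>
                    transpose (M ** X) = M ** X \<and> transpose (X ** M) = X ** M)"

definition col_space :: "real^'c^'r \<Rightarrow> (real^'r) set" where
  "col_space M = range (\<lambda>c. M *v c)"

definition principal_vectors ::
  "'a::real_inner set \<Rightarrow> 'a set \<Rightarrow> nat \<Rightarrow> (nat \<Rightarrow> 'a) \<Rightarrow> (nat \<Rightarrow> 'a) \<Rightarrow> bool" where
  "principal_vectors U V k u v \<longleftrightarrow>
     (\<forall>j<k. u j \<in> U \<and> v j \<in> V \<and> norm (u j) = 1 \<and> norm (v j) = 1 \<and>
        (\<forall>i<j. u j \<bullet> u i = 0 \<and> v j \<bullet> v i = 0) \<and>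
        (\<forall>u' v'. u' \<in> U \<and> v' \<in> V \<and> norm u' = 1 \<and> norm v' = 1 \<and>
           (\<forall>i<j. u' \<bullet> u i = 0 \<and> v' \<bullet> v i = 0) \<longrightarrow> \<bar>u' \<bullet> v'\<bar> \<le> \<bar>u j \<bullet> v j\<bar>))"

definition principal_angle :: "(nat \<Rightarrow> 'a::real_inner) \<Rightarrow> (nat \<Rightarrow> 'a) \<Rightarrow> nat \<Rightarrow> real" where
  "principal_angle u v j = arccos \<bar>u j \<bullet> v j\<bar>"

end

theory Submission
  imports Defs
begin

lemma cs_eq:
  fixes x y :: "'a::real_inner"
  assumes "norm y = 1" "norm x \<le> \<bar>x \<bullet> y\<bar>"
  shows "x = (x \<bullet> y) *\<^sub>R y"
proof -
  have "\<bar>x \<bullet> y\<bar> \<le> norm x" using Cauchy_Schwarz_ineq2[of x y] assms(1) by simp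
  hence "norm x = \<bar>x \<bullet> y\<bar>" using assms(2) by simp
  hence e: "(x \<bullet> y)^2 = x \<bullet> x"
    by (metis power2_abs power2_norm_eq_inner)
  have "(x - (x \<bullet> y) *\<^sub>R y) \<bullet> (x - (x \<bullet> y) *\<^sub>R y) = x \<bullet> x - (x \<bullet> y)^2"
    using assms(1) by (simp add: inner_diff_left inner_diff_right inner_commute power2_eq_square norm_eq_1[symmetric])
  also have "\<dots> = 0" using e by simp
  finally show ?thesis by simp
qed

lemma pv_sym:
  assumes "principal_vectors U V k u w"
  shows "principal_vectors V U k w u"
  using assms unfolding principal_vectors_def
  by (metis inner_commute)

lemma pv_step:
  fixes U V :: "'a::real_inner set"
  assumes pv: "principal_vectors U V k u w" and jk: "j < k"
    and sV: "subspace V"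
    and PV: "\<And>y. PV y \<in> V" "\<And>y z. z \<in> V \<Longrightarrow> (y - PV y) \<bullet> z = 0"
    and PU: "\<And>y z. z \<in> U \<Longrightarrow> (y - PU y) \<bullet> z = 0"
    and IH: "\<And>i. i < j \<Longrightarrow> PU (w i) = (u i \<bullet> w i) *\<^sub>R u i"
  shows "PV (u j) = (u j \<bullet> w j) *\<^sub>R w j"
proof -
  have P: "\<forall>j<k. u j \<in> U \<and> w j \<in> V \<and> norm (u j) = 1 \<and> norm (w j) = 1 \<and>
        (\<forall>i<j. u j \<bullet> u i = 0 \<and> w j \<bullet> w i = 0) \<and>
        (\<forall>u' v'. u' \<in> U \<and> v' \<in> V \<and> norm u' = 1 \<and> norm v' = 1 \<and>
           (\<forall>i<j. u' \<bullet> u i = 0 \<and> v' \<bullet> w i = 0) \<longrightarrow> \<bar>u' \<bullet> v'\<bar> \<le> \<bar>u j \<bullet> w j\<bar>)"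
    using pv unfolding principal_vectors_def by blast
  define p where "p = PV (u j)"
  have pV: "p \<in> V" using PV p_def by auto
  have ik: "i < j \<Longrightarrow> i < k" for i using jk by simp
  have orth: "p \<bullet> w i = 0" if "i < j" for i
  proof -
    have "(u j - p) \<bullet> w i = 0" using PV(2) P ik[OF that] p_def by blast
    hence "p \<bullet> w i = u j \<bullet> w i" by (simp add: inner_diff_left)
    also have "u j \<bullet> w i = u j \<bullet> PU (w i)"
    proof -
      have "(w i - PU (w i)) \<bullet> u j = 0" using PU P jk by blast
      thus ?thesis by (simp add: inner_diff_left inner_diff_right inner_commute)
    qed
    also have "\<dots> = 0" using IH[OF that] P jk that by auto
    finally show ?thesis .
  qed
  have c: "u j \<bullet> w j = p \<bullet> w j"
  proof -
    have "(u j - p) \<bullet> w j = 0" using PV(2) P jk p_def by blast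
    thus ?thesis by (simp add: inner_diff_left)
  qed
  have up: "u j \<bullet> p = p \<bullet> p"
  proof -
    have "(u j - p) \<bullet> p = 0" using PV(2) pV p_def by blast
    thus ?thesis by (simp add: inner_diff_left)
  qed
  show ?thesis
  proof (cases "p = 0")
    case True
    then show ?thesis using c p_def by simp
  next
    case False
    define p' where "p' = p /\<^sub>R norm p"
    have "p' \<in> V" using sV pV p'_def by (simp add: subspace_scale)
    moreover have "norm p' = 1" using False p'_def by simp
    moreover have "\<forall>i<j. p' \<bullet> w i = 0" using orth p'_def by simp
    ultimately have "\<bar>u j \<bullet> p'\<bar> \<le> \<bar>u j \<bullet> w j\<bar>" using P jk by blast
    moreover have "u j \<bullet> p' = norm p" using up p'_def False
      by (simp add: power2_norm_eq_inner[symmetric] power2_eq_square)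
    ultimately have "norm p \<le> \<bar>p \<bullet> w j\<bar>" using c by simp
    hence "p = (p \<bullet> w j) *\<^sub>R w j" using cs_eq P jk by blast
    then show ?thesis using c p_def by simp
  qed
qed

lemma pv_proj:
  fixes U V :: "'a::real_inner set"
  assumes pv: "principal_vectors U V k u w"
    and sU: "subspace U" and sV: "subspace V"
    and PV: "\<And>y. PV y \<in> V" "\<And>y z. z \<in> V \<Longrightarrow> (y - PV y) \<bullet> z = 0"
    and PU: "\<And>y. PU y \<in> U" "\<And>y z. z \<in> U \<Longrightarrow> (y - PU y) \<bullet> z = 0"
  shows "j < k \<Longrightarrow> PV (u j) = (u j \<bullet> w j) *\<^sub>R w j \<and> PU (w j) = (u j \<bullet> w j) *\<^sub>R u j"
proof (induction j rule: less_induct)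
  case (less j)
  have a: "PV (u j) = (u j \<bullet> w j) *\<^sub>R w j"
    by (rule pv_step[OF pv less.prems sV PV PU(2)]) (use less.IH less.prems in auto)
  have "PU (w j) = (w j \<bullet> u j) *\<^sub>R u j"
    by (rule pv_step[OF pv_sym[OF pv] less.prems sU PU PV(2)])
       (use less.IH less.prems in \<open>auto simp: inner_commute\<close>)
  then show ?case using a by (simp add: inner_commute)
qed


lemma feasible_exists:
  fixes U :: "'a::euclidean_space set"
  assumes sU: "subspace U" and kd: "k < dim U" and uU: "\<And>i. i < k \<Longrightarrow> u i \<in> U"
  shows "\<exists>x\<in>U. norm x = 1 \<and> (\<forall>i<k. x \<bullet> u i = 0)"
proof -
  let ?S = "u ` {..<k}"
  have "\<not> U \<subseteq> span ?S"
  proof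
    assume "U \<subseteq> span ?S"
    hence "dim U \<le> dim (span ?S)" by (rule dim_subset)
    also have "\<dots> = dim ?S" by simp
    also have "\<dots> \<le> card ?S" by (rule dim_le_card) (auto intro: span_base)
    also have "\<dots> \<le> k" using card_image_le[of "{..<k}" u] by simp
    finally show False using kd by simp
  qed
  then obtain x where xU: "x \<in> U" and xS: "x \<notin> span ?S" by blast
  obtain y z where y: "y \<in> span ?S" and z: "\<And>w. w \<in> span ?S \<Longrightarrow> orthogonal z w" and xyz: "x = y + z"
    using orthogonal_subspace_decomp_exists[of ?S x] by blast
  have "span ?S \<subseteq> U" by (rule span_minimal) (use sU uU in auto)
  hence yU: "y \<in> U" using y by blast
  have zU: "z \<in> U" using xyz xU yU sU by (metis add_diff_cancel_left' subspace_diff)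
  have z0: "z \<noteq> 0" using xyz xS y by auto
  have zo: "z \<bullet> u i = 0" if "i < k" for i
    using z[of "u i"] that by (auto simp: orthogonal_def intro: span_base)
  show ?thesis
    by (rule bexI[of _ "z /\<^sub>R norm z"]) (use z0 zo zU sU in \<open>auto simp: subspace_scale\<close>)
qed

lemma orth_subspace: "subspace {x::'a::real_inner. \<forall>i<k. x \<bullet> u i = 0}"
  unfolding subspace_def by (auto simp: inner_add_left)

lemma pv_exists:
  fixes U V :: "'a::euclidean_space set"
  assumes sU: "subspace U" and sV: "subspace V"
  shows "k \<le> dim U \<Longrightarrow> k \<le> dim V \<Longrightarrow> \<exists>u w. principal_vectors U V k u w"
proof (induction k)
  case 0
  then show ?case by (simp add: principal_vectors_def)
next
  case (Suc k)
  then obtain u w where pv: "principal_vectors U V k u w" by auto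
  have P: "\<forall>j<k. u j \<in> U \<and> w j \<in> V" using pv unfolding principal_vectors_def by blast
  define S1 where "S1 = {x\<in>U. norm x = 1 \<and> (\<forall>i<k. x \<bullet> u i = 0)}"
  define S2 where "S2 = {x\<in>V. norm x = 1 \<and> (\<forall>i<k. x \<bullet> w i = 0)}"
  have e1: "S1 = sphere 0 1 \<inter> (U \<inter> {x. \<forall>i<k. x \<bullet> u i = 0})" unfolding S1_def by auto
  have "closed (U \<inter> {x. \<forall>i<k. x \<bullet> u i = 0})"
    by (intro closed_subspace subspace_inter sU orth_subspace)
  hence c1: "compact S1" unfolding e1 by (simp add: compact_Int_closed)
  have e2: "S2 = sphere 0 1 \<inter> (V \<inter> {x. \<forall>i<k. x \<bullet> w i = 0})" unfolding S2_def by auto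
  have "closed (V \<inter> {x. \<forall>i<k. x \<bullet> w i = 0})"
    by (intro closed_subspace subspace_inter sV orth_subspace)
  hence c2: "compact S2" unfolding e2 by (simp add: compact_Int_closed)
  have n1: "S1 \<noteq> {}" using feasible_exists[OF sU, of k u] Suc.prems P unfolding S1_def by auto
  have n2: "S2 \<noteq> {}" using feasible_exists[OF sV, of k w] Suc.prems P unfolding S2_def by auto
  have "\<exists>p\<in>S1 \<times> S2. \<forall>q\<in>S1 \<times> S2. \<bar>fst q \<bullet> snd q\<bar> \<le> \<bar>fst p \<bullet> snd p\<bar>"
    by (rule continuous_attains_sup) (use c1 c2 n1 n2 in \<open>auto simp: compact_Times intro!: continuous_intros\<close>)
  then obtain a b where ab: "a \<in> S1" "b \<in> S2"
    and mx: "\<And>a' b'. a' \<in> S1 \<Longrightarrow> b' \<in> S2 \<Longrightarrow> \<bar>a' \<bullet> b'\<bar> \<le> \<bar>a \<bullet> b\<bar>" by force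
  have "principal_vectors U V (Suc k) (u(k := a)) (w(k := b))"
    unfolding principal_vectors_def
  proof (intro allI impI)
    fix j assume "j < Suc k"
    then consider "j < k" | "j = k" by linarith
    then show "(u(k := a)) j \<in> U \<and> (w(k := b)) j \<in> V \<and> norm ((u(k := a)) j) = 1 \<and> norm ((w(k := b)) j) = 1 \<and>
        (\<forall>i<j. (u(k := a)) j \<bullet> (u(k := a)) i = 0 \<and> (w(k := b)) j \<bullet> (w(k := b)) i = 0) \<and>
        (\<forall>u' v'. u' \<in> U \<and> v' \<in> V \<and> norm u' = 1 \<and> norm v' = 1 \<and>
           (\<forall>i<j. u' \<bullet> (u(k := a)) i = 0 \<and> v' \<bullet> (w(k := b)) i = 0) \<longrightarrow>
              \<bar>u' \<bullet> v'\<bar> \<le> \<bar>(u(k := a)) j \<bullet> (w(k := b)) j\<bar>)"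
    proof cases
      case 1
      have Pj: "u j \<in> U \<and> w j \<in> V \<and> norm (u j) = 1 \<and> norm (w j) = 1 \<and>
        (\<forall>i<j. u j \<bullet> u i = 0 \<and> w j \<bullet> w i = 0) \<and>
        (\<forall>u' v'. u' \<in> U \<and> v' \<in> V \<and> norm u' = 1 \<and> norm v' = 1 \<and>
           (\<forall>i<j. u' \<bullet> u i = 0 \<and> v' \<bullet> w i = 0) \<longrightarrow> \<bar>u' \<bullet> v'\<bar> \<le> \<bar>u j \<bullet> w j\<bar>)"
        using pv 1 unfolding principal_vectors_def by blast
      have e: "(u(k := a)) j = u j" "(w(k := b)) j = w j" using 1 by auto
      have e2: "\<And>i. i < j \<Longrightarrow> (u(k := a)) i = u i" "\<And>i. i < j \<Longrightarrow> (w(k := b)) i = w i" using 1 by auto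
      show ?thesis unfolding e using Pj by (simp add: e2 del: fun_upd_apply cong: conj_cong)
    next
      case 2
      have e: "(u(k := a)) j = a" "(w(k := b)) j = b" using 2 by auto
      have e2: "\<And>i. i < j \<Longrightarrow> (u(k := a)) i = u i" "\<And>i. i < j \<Longrightarrow> (w(k := b)) i = w i" using 2 by auto
      have "a \<in> U \<and> b \<in> V \<and> norm a = 1 \<and> norm b = 1 \<and>
        (\<forall>i<j. a \<bullet> u i = 0 \<and> b \<bullet> w i = 0) \<and>
        (\<forall>u' v'. u' \<in> U \<and> v' \<in> V \<and> norm u' = 1 \<and> norm v' = 1 \<and>
           (\<forall>i<j. u' \<bullet> u i = 0 \<and> v' \<bullet> w i = 0) \<longrightarrow> \<bar>u' \<bullet> v'\<bar> \<le> \<bar>a \<bullet> b\<bar>)"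
        using ab mx 2 unfolding S1_def S2_def by blast
      then show ?thesis unfolding e by (simp add: e2 del: fun_upd_apply cong: conj_cong)
    qed
  qed
  then show ?case by blast
qed


lemma pinv_full:
  fixes A :: "real^'s^'N"
  assumes r: "rank A = CARD('s)"
  shows "pinv A ** A = mat 1"
    and "\<And>y c. (y - A *v (pinv A *v y)) \<bullet> (A *v c) = 0"
proof -
  let ?C = "transpose A ** A"
  have injA: "inj ((*v) A)" using r full_rank_injective by blast
  have "inj ((*v) ?C)"
  proof (rule injI)
    fix x y assume "?C *v x = ?C *v y"
    hence "?C *v (x - y) = 0" by (simp add: matrix_vector_mult_diff_distrib)
    moreover have "?C *v (x - y) = transpose A *v (A *v (x - y))" by (simp only: matrix_vector_mul_assoc)
    ultimately have "((A *v (x - y)) v* A) \<bullet> (x - y) = 0" by simp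
    hence "(A *v (x - y)) \<bullet> (A *v (x - y)) = 0" by (simp only: dot_lmul_matrix)
    hence "A *v (x - y) = 0" by simp
    hence "A *v x = A *v y" by (simp add: matrix_vector_mult_diff_distrib)
    thus "x = y" using injA by (simp add: inj_eq)
  qed
  then obtain M where M1: "M ** ?C = mat 1" using matrix_left_invertible_injective by blast
  have M2: "?C ** M = mat 1" using M1 matrix_left_right_inverse by blast
  have Ct: "transpose ?C = ?C" by (simp add: matrix_transpose_mul)
  have "transpose (?C ** M) = mat 1" using M2 by simp
  hence MC: "transpose M ** ?C = mat 1" by (simp only: matrix_transpose_mul transpose_transpose)
  have "transpose M = transpose M ** (?C ** M)" using M2 by simp
  also have "\<dots> = (transpose M ** ?C) ** M" by (simp only: matrix_mul_assoc)
  also have "\<dots> = M" using MC by simp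
  finally have Mt: "transpose M = M" .
  define G where "G = M ** transpose A"
  have GA: "G ** A = mat 1" unfolding G_def using M1 by (simp add: matrix_mul_assoc)
  have c1: "A ** G ** A = A" using GA by (simp add: matrix_mul_assoc[symmetric])
  have c2: "G ** A ** G = G" by (simp add: GA)
  have c3: "transpose (A ** G) = A ** G" unfolding G_def
    by (simp add: matrix_transpose_mul Mt matrix_mul_assoc)
  have c4: "transpose (G ** A) = G ** A" by (simp add: GA)
  have "pinv A = G" unfolding pinv_def
  proof (rule the_equality)
    show "A ** G ** A = A \<and> G ** A ** G = G \<and> transpose (A ** G) = A ** G \<and> transpose (G ** A) = G ** A"
      using c1 c2 c3 c4 by blast
  next
    fix X assume X: "A ** X ** A = A \<and> X ** A ** X = X \<and> transpose (A ** X) = A ** X \<and> transpose (X ** A) = X ** A"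
    have "transpose A ** (A ** X) = transpose A ** transpose (A ** X)" using X by simp
    also have "\<dots> = transpose (A ** X ** A)" by (simp add: matrix_transpose_mul)
    also have "\<dots> = transpose A" using X by simp
    finally have e: "transpose A ** (A ** X) = transpose A" .
    have "X = M ** ?C ** X" using M1 by simp
    also have "\<dots> = M ** (transpose A ** (A ** X))" by (simp add: matrix_mul_assoc)
    also have "\<dots> = G" using e G_def by simp
    finally show "X = G" .
  qed
  thus "pinv A ** A = mat 1" using GA by simp
  fix y c
  have "transpose A *v (y - A *v (G *v y)) = 0"
  proof -
    have "transpose A *v (A *v (G *v y)) = (?C ** M) *v (transpose A *v y)"
      unfolding G_def by (simp only: matrix_vector_mul_assoc matrix_mul_assoc)
    thus ?thesis using M2 by (simp add: matrix_vector_mult_diff_distrib)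
  qed
  hence "(y - A *v (G *v y)) v* A = 0" by simp
  hence "((y - A *v (G *v y)) v* A) \<bullet> c = 0" by simp
  thus "(y - A *v (pinv A *v y)) \<bullet> (A *v c) = 0" using \<open>pinv A = G\<close> by (simp add: dot_lmul_matrix)
qed


lemma col_sub: "subspace (col_space (A::real^'s^'N))"
  unfolding col_space_def
  unfolding subspace_def
  by (metis (no_types, lifting) image_eqI matrix_vector_mult_0_right matrix_vector_mult_scaleR
      matrix_vector_right_distrib rangeE rangeI)

lemma col_dim: "dim (col_space (A::real^'s^'N)) = rank A"
  unfolding col_space_def by (simp add: rank_dim_range)

lemma GA_cancel:
  fixes A :: "real^'s^'N"
  assumes "rank A = CARD('s)"
  shows "pinv A *v (A *v z) = z"
  using pinv_full(1)[OF assms] by (simp add: matrix_vector_mul_assoc)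

lemma proj_props:
  fixes A :: "real^'s^'N"
  assumes "rank A = CARD('s)"
  shows "A *v (pinv A *v y) \<in> col_space A"
    and "z \<in> col_space A \<Longrightarrow> (y - A *v (pinv A *v y)) \<bullet> z = 0"
  using pinv_full(2)[OF assms] unfolding col_space_def by auto

lemma eig:
  fixes A B :: "real^'s^'N"
  assumes rA: "rank A = CARD('s)" and rB: "rank B = CARD('s)"
    and pv: "principal_vectors (col_space A) (col_space B) k u w" and ik: "i < k"
  shows "A *v (pinv A *v u i) = u i"
    and "(mat 1 - pinv A ** B ** (pinv B ** A)) *v (pinv A *v u i) = (1 - (u i \<bullet> w i)^2) *\<^sub>R (pinv A *v u i)"
proof -
  have pr: "B *v (pinv B *v u i) = (u i \<bullet> w i) *\<^sub>R w i \<and> A *v (pinv A *v w i) = (u i \<bullet> w i) *\<^sub>R u i"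
    by (rule pv_proj[OF pv col_sub col_sub, of "\<lambda>y. B *v (pinv B *v y)" "\<lambda>y. A *v (pinv A *v y)"])
       (use proj_props[OF rA] proj_props[OF rB] ik in auto)
  have "u i \<in> col_space A" using pv ik unfolding principal_vectors_def by blast
  then obtain c where c: "u i = A *v c" unfolding col_space_def by auto
  have vc: "pinv A *v u i = c" using c GA_cancel[OF rA] by simp
  show Av: "A *v (pinv A *v u i) = u i" using vc c by simp
  define v where "v = pinv A *v u i"
  define ci where "ci = u i \<bullet> w i"
  have gw: "pinv A *v w i = ci *\<^sub>R v"
  proof -
    have "pinv A *v w i = pinv A *v (A *v (pinv A *v w i))" using GA_cancel[OF rA] by simp
    also have "\<dots> = ci *\<^sub>R v" using pr unfolding ci_def v_def by (simp add: matrix_vector_mult_scaleR)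
    finally show ?thesis .
  qed
  have "(mat 1 - pinv A ** B ** (pinv B ** A)) *v v = v - pinv A *v (B *v (pinv B *v (A *v v)))"
    by (simp only: matrix_vector_mult_diff_rdistrib matrix_vector_mul_lid matrix_vector_mul_assoc[symmetric])
  also have "\<dots> = v - pinv A *v (ci *\<^sub>R w i)" using Av pr unfolding v_def ci_def by simp
  also have "\<dots> = (1 - ci^2) *\<^sub>R v" using gw
    by (simp add: matrix_vector_mult_scaleR algebra_simps power2_eq_square)
  finally show "(mat 1 - pinv A ** B ** (pinv B ** A)) *v (pinv A *v u i) = (1 - (u i \<bullet> w i)^2) *\<^sub>R (pinv A *v u i)"
    unfolding v_def ci_def .
qed

lemma sin_pa:
  assumes pv: "principal_vectors U V k u w" and ik: "i < k"
  shows "(sin (principal_angle u w i))^2 = 1 - (u i \<bullet> w i)^2"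
proof -
  have n: "norm (u i) = 1" "norm (w i) = 1" using pv ik unfolding principal_vectors_def by auto
  have "\<bar>u i \<bullet> w i\<bar> \<le> 1" using Cauchy_Schwarz_ineq2[of "u i" "w i"] n by simp
  thus ?thesis unfolding principal_angle_def
    by (simp add: sin_arccos abs_square_le_1)
qed


lemma smat_mult: "((t::real) *\<^sub>R mat 1) *v (x::real^'n) = t *\<^sub>R x"
  by (simp add: vec_eq_iff matrix_vector_mult_def mat_def if_distrib if_distribR cong: if_cong)

lemma det_eig:
  fixes Mc :: "real^'s^'s" and A :: "real^'s^'N" and v :: "nat \<Rightarrow> real^'s"
    and lam :: "nat \<Rightarrow> real" and u :: "nat \<Rightarrow> real^'N"
  assumes ev: "\<And>i. i < CARD('s) \<Longrightarrow> Mc *v v i = lam i *\<^sub>R v i"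
    and Av: "\<And>i. i < CARD('s) \<Longrightarrow> A *v v i = u i"
    and on: "\<And>i j. i < CARD('s) \<Longrightarrow> j < CARD('s) \<Longrightarrow> u i \<bullet> u j = (if i = j then 1 else 0)"
  shows "det (t *\<^sub>R mat 1 - Mc) = (\<Prod>i<CARD('s). t - lam i)"
proof -
  obtain h where h: "bij_betw h {0..<CARD('s)} (UNIV::'s set)"
    using ex_bij_betw_nat_finite[of "UNIV::'s set"] by auto
  define g where "g = inv_into {0..<CARD('s)} h"
  have g: "bij_betw g UNIV {0..<CARD('s)}" using h bij_betw_inv_into g_def by blast
  have gl: "\<And>k. g k < CARD('s)" using g by (auto simp: bij_betw_def)
  have ginj: "\<And>a b. g a = g b \<Longrightarrow> a = b" using g by (auto simp: bij_betw_def inj_on_def)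
  define Vm :: "real^'s^'s" where "Vm = (\<chi> r k. v (g k) $ r)"
  define D :: "real^'s^'s" where "D = (\<chi> a b. if a = b then t - lam (g a) else 0)"
  have 1: "(t *\<^sub>R mat 1 - Mc) ** Vm = Vm ** D"
  proof -
    have "((t *\<^sub>R mat 1 - Mc) ** Vm) $ r $ k = (Vm ** D) $ r $ k" for r k
    proof -
      have "((t *\<^sub>R mat 1 - Mc) ** Vm) $ r $ k = ((t *\<^sub>R mat 1 - Mc) *v v (g k)) $ r"
        by (simp add: matrix_matrix_mult_def matrix_vector_mult_def Vm_def)
      also have "\<dots> = (t - lam (g k)) * v (g k) $ r"
        using ev[OF gl] by (simp add: matrix_vector_mult_diff_rdistrib smat_mult algebra_simps)
      also have "\<dots> = (Vm ** D) $ r $ k"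
        by (simp add: matrix_matrix_mult_def D_def Vm_def if_distrib if_distribR cong: if_cong)
      finally show ?thesis .
    qed
    thus ?thesis by (simp add: vec_eq_iff)
  qed
  have "det D = (\<Prod>k\<in>UNIV. t - lam (g k))"
    by (subst det_diagonal) (auto simp: D_def)
  also have "\<dots> = (\<Prod>i\<in>{0..<CARD('s)}. t - lam i)"
    by (rule prod.reindex_bij_betw[OF g])
  finally have detD: "det D = (\<Prod>i<CARD('s). t - lam i)" by (simp add: atLeast0LessThan)
  have Q: "A ** Vm = (\<chi> r k. u (g k) $ r)"
  proof -
    have "(A ** Vm) $ r $ k = u (g k) $ r" for r k
    proof -
      have "(A ** Vm) $ r $ k = (A *v v (g k)) $ r"
        by (simp add: matrix_matrix_mult_def matrix_vector_mult_def Vm_def)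
      thus ?thesis using Av[OF gl] by simp
    qed
    thus ?thesis by (simp add: vec_eq_iff)
  qed
  have QQ: "transpose (A ** Vm) ** (A ** Vm) = mat 1"
  proof -
    have "(transpose (A ** Vm) ** (A ** Vm)) $ a $ b = (mat 1 :: real^'s^'s) $ a $ b" for a b
    proof -
      have "(transpose (A ** Vm) ** (A ** Vm)) $ a $ b = u (g a) \<bullet> u (g b)"
        unfolding Q by (simp add: matrix_matrix_mult_def transpose_def inner_vec_def)
      also have "\<dots> = (if a = b then 1 else 0)" using on[OF gl gl] ginj by auto
      finally show ?thesis by (simp add: mat_def)
    qed
    thus ?thesis by (simp add: vec_eq_iff)
  qed
  have dV: "det Vm \<noteq> 0"
  proof
    assume "det Vm = 0"
    have "transpose (A ** Vm) ** (A ** Vm) = (transpose Vm ** (transpose A ** A)) ** Vm"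
      by (simp add: matrix_transpose_mul matrix_mul_assoc)
    hence "det (transpose (A ** Vm) ** (A ** Vm)) = 0" using \<open>det Vm = 0\<close> by (simp add: det_mul)
    thus False using QQ by simp
  qed
  have "det (t *\<^sub>R mat 1 - Mc) * det Vm = det Vm * det D" using 1 by (metis det_mul)
  thus ?thesis using dV detD by simp
qed


lemma pv_on:
  assumes pv: "principal_vectors U V k u w" and "i < k" "j < k"
  shows "u i \<bullet> u j = (if i = j then 1 else 0)"
proof -
  have P: "\<forall>j<k. norm (u j) = 1 \<and> (\<forall>i<j. u j \<bullet> u i = 0)"
    using pv unfolding principal_vectors_def by blast
  show ?thesis
  proof (cases "i = j")
    case True thus ?thesis using P assms by (simp add: norm_eq_1[symmetric])
  next
    case False
    then consider "i < j" | "j < i" by linarith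
    thus ?thesis using P assms False by cases (auto simp: inner_commute)
  qed
qed

theorem lemma1:
  fixes T :: "real^'d \<Rightarrow> real^'d"
    and Xdom :: "(real^'d) set"
    and x :: "'N::finite \<Rightarrow> real^'d"
    and psi :: "'s::finite \<Rightarrow> real^'d \<Rightarrow> real"
    and A B :: "real^'s^'N"
    and Kf Kb Mc :: "real^'s^'s"
  assumes "T ` Xdom \<subseteq> Xdom"
    and "\<And>i. x i \<in> Xdom"
    and A_def: "A = (\<chi> i j. psi j (x i))"
    and B_def: "B = (\<chi> i j. psi j (T (x i)))"
    and "rank A = CARD('s)"
    and "rank B = CARD('s)"
    and Kf_def: "Kf = pinv A ** B"
    and Kb_def: "Kb = pinv B ** A"
    and Mc_def: "Mc = mat 1 - Kf ** Kb"
  shows "(\<forall>u w. principal_vectors (col_space A) (col_space B) CARD('s) u w \<longrightarrow>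
            (\<forall>t::real. det (t *\<^sub>R mat 1 - Mc) =
               (\<Prod>i<CARD('s). t - (sin (principal_angle u w i))\<^sup>2)))
       \<and> (\<exists>u w v. principal_vectors (col_space A) (col_space B) CARD('s) u w \<and>
            (\<forall>i<CARD('s). v i \<noteq> 0 \<and>
               Mc *v v i = (sin (principal_angle u w i))\<^sup>2 *\<^sub>R v i \<and>
               A *v v i = u i))"
proof -
  note rA = \<open>rank A = CARD('s)\<close> and rB = \<open>rank B = CARD('s)\<close>
  have Mc_eq: "Mc = mat 1 - pinv A ** B ** (pinv B ** A)" using Mc_def Kf_def Kb_def by simp
  have key: "\<forall>i<CARD('s). pinv A *v u i \<noteq> 0 \<and>
               Mc *v (pinv A *v u i) = (sin (principal_angle u w i))\<^sup>2 *\<^sub>R (pinv A *v u i) \<and>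
               A *v (pinv A *v u i) = u i"
    if pv: "principal_vectors (col_space A) (col_space B) CARD('s) u w" for u w
  proof (intro allI impI conjI)
    fix i assume i: "i < CARD('s)"
    show Av: "A *v (pinv A *v u i) = u i" by (rule eig(1)[OF rA rB pv i])
    have "norm (u i) = 1" using pv i unfolding principal_vectors_def by blast
    thus "pinv A *v u i \<noteq> 0" using Av by auto
    show "Mc *v (pinv A *v u i) = (sin (principal_angle u w i))\<^sup>2 *\<^sub>R (pinv A *v u i)"
      unfolding Mc_eq sin_pa[OF pv i] by (rule eig(2)[OF rA rB pv i])
  qed
  have p1: "\<forall>u w. principal_vectors (col_space A) (col_space B) CARD('s) u w \<longrightarrow>
            (\<forall>t::real. det (t *\<^sub>R mat 1 - Mc) =
               (\<Prod>i<CARD('s). t - (sin (principal_angle u w i))\<^sup>2))"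
  proof (intro allI impI)
    fix u w t assume pv: "principal_vectors (col_space A) (col_space B) CARD('s) u w"
    show "det (t *\<^sub>R mat 1 - Mc) = (\<Prod>i<CARD('s). t - (sin (principal_angle u w i))\<^sup>2)"
      by (rule det_eig[of Mc "\<lambda>i. pinv A *v u i" _ A u])
         (use key[OF pv] pv_on[OF pv] in auto)
  qed
  obtain u w where pv: "principal_vectors (col_space A) (col_space B) CARD('s) u w"
    using pv_exists[OF col_sub col_sub, of "CARD('s)" A B] by (auto simp: col_dim rA rB)
  have "\<exists>u w v. principal_vectors (col_space A) (col_space B) CARD('s) u w \<and>
            (\<forall>i<CARD('s). v i \<noteq> 0 \<and>
               Mc *v v i = (sin (principal_angle u w i))\<^sup>2 *\<^sub>R v i \<and>
               A *v v i = u i)"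
    by (rule exI[of _ u], rule exI[of _ w], rule exI[of _ "\<lambda>i. pinv A *v u i"]) (use key[OF pv] pv in blast)
  with p1 show ?thesis by (rule conjI)
qed

end
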